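(* Let $(q_n),(r_n)$ be complex sequences vanishing faster than any negative power of $|n|$ as $n\to\pm\infty$ with $1-q_nr_n\neq0$ and $1+q_nr_{n+1}\ne0$ for all $n$, and let $D_\infty,E_\infty,u_n,v_n,p_n,s_n$ be as in the context. Writing $[\mathbf K]_1,[\mathbf K]_2$ for the first and second components of a column vector $\mathbf K$, we have $$q_n=\frac{D_\infty}{E_\infty}\left(\frac{[\psi_n^{(u,v)}(1)]_1}{[\bar\psi_n^{(u,v)}(1)]_1}-\frac{[\psi_{n+1}^{(u,v)}(1)]_1}{[\bar\psi_{n+1}^{(u,v)}(1)]_1}\right),$$ $$r_n=-\frac{E_\infty}{D_\infty}\,\frac{[\bar\psi_n^{(u,v)}(1)]_1[\bar\psi_n^{(u,v)}(1)]_2}{[\bar\psi_n^{(u,v)}(1)]_1[\psi_n^{(u,v)}(1)]_2-[\bar\psi_n^{(u,v)}(1)]_2[\psi_n^{(u,v)}(1)]_1},$$ $$q_n=\frac{D_\infty}{E_\infty}\,\frac{[\psi_n^{(p,s)}(1)]_1[\psi_n^{(p,s)}(1)]_2}{[\bar\psi_n^{(p,s)}(1)]_1[\psi_n^{(p,s)}(1)]_2-[\bar\psi_n^{(p,s)}(1)]_2[\psi_n^{(p,s)}(1)]_1},$$ $$r_n=\frac{E_\infty}{D_\infty}\left(\frac{[\bar\psi_{n-1}^{(p,s)}(1)]_2}{[\psi_{n-1}^{(p,s)}(1)]_2}-\frac{[\bar\psi_{n}^{(p,s)}(1)]_2}{[\psi_{n}^{(p,s)}(1)]_2}\right).$$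
   Context: System (U) with potentials $(a,b)$: $\begin{bmatrix}\xi_n\\ \eta_n\end{bmatrix}=\begin{bmatrix} z & z a_n\\ z^{-1}b_n & z^{-1}\end{bmatrix}\begin{bmatrix}\xi_{n+1}\\ \eta_{n+1}\end{bmatrix}$. $D_n=\prod_{j\le n}(1-q_jr_j)$, $E_n=\prod_{j\le n}(1+q_jr_{j+1})$, $D_\infty=\prod_{j\in\mathbb Z}(1-q_jr_j)$, $E_\infty=\prod_{j\in\mathbb Z}(1+q_jr_{j+1})$; $u_n=q_nE_{n-1}/D_n$, $v_n=(-r_n+r_{n+1}-q_nr_nr_{n+1})D_{n-1}/E_n$, $p_n=(q_n-q_{n+1}-q_nq_{n+1}r_{n+1})E_{n-1}/D_{n+1}$, $s_n=r_{n+1}D_n/E_n$. For system (U) with potentials $(u,v)$ (resp. $(p,s)$) and $|z|=1$, $\psi_n^{(u,v)}$, $\bar\psi_n^{(u,v)}$ (resp. $\psi_n^{(p,s)}$, $\bar\psi_n^{(p,s)}$) denote the Jost solutions, i.e. the unique solutions with $\psi_n=\begin{bmatrix}o(1)\\ z^n[1+o(1)]\end{bmatrix}$ and $\bar\psi_n=\begin{bmatrix}z^{-n}[1+o(1)]\\ o(1)\end{bmatrix}$ as $n\to+\infty$ (overbar not complex conjugation); they are evaluated at $z=1$. *)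

theory Defs
  imports "HOL-Analysis.Analysis"
begin

text \<open>Sequences indexed by the integers; a pair (x, y) stands for the column vector [x; y].\<close>

definition rapid_decay :: "(int \<Rightarrow> complex) \<Rightarrow> bool" where
  "rapid_decay q \<longleftrightarrow> (\<forall>k::nat.
      ((\<lambda>n. (of_int n) ^ k * q n) \<longlongrightarrow> 0) at_top \<and>
      ((\<lambda>n. (of_int n) ^ k * q n) \<longlongrightarrow> 0) at_bot)"

definition Dn :: "(int \<Rightarrow> complex) \<Rightarrow> (int \<Rightarrow> complex) \<Rightarrow> int \<Rightarrow> complex" where
  "Dn q r n = lim (\<lambda>m::nat. \<Prod>j\<in>{n - int m..n}. 1 - q j * r j)"

definition En :: "(int \<Rightarrow> complex) \<Rightarrow> (int \<Rightarrow> complex) \<Rightarrow> int \<Rightarrow> complex" where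
  "En q r n = lim (\<lambda>m::nat. \<Prod>j\<in>{n - int m..n}. 1 + q j * r (j + 1))"

definition Dinf :: "(int \<Rightarrow> complex) \<Rightarrow> (int \<Rightarrow> complex) \<Rightarrow> complex" where
  "Dinf q r = lim (\<lambda>m::nat. \<Prod>j\<in>{- int m..int m}. 1 - q j * r j)"

definition Einf :: "(int \<Rightarrow> complex) \<Rightarrow> (int \<Rightarrow> complex) \<Rightarrow> complex" where
  "Einf q r = lim (\<lambda>m::nat. \<Prod>j\<in>{- int m..int m}. 1 + q j * r (j + 1))"

definition u_pot :: "(int \<Rightarrow> complex) \<Rightarrow> (int \<Rightarrow> complex) \<Rightarrow> int \<Rightarrow> complex" where
  "u_pot q r n = q n * En q r (n - 1) / Dn q r n"

definition v_pot :: "(int \<Rightarrow> complex) \<Rightarrow> (int \<Rightarrow> complex) \<Rightarrow> int \<Rightarrow> complex" where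
  "v_pot q r n = (- r n + r (n + 1) - q n * r n * r (n + 1)) * Dn q r (n - 1) / En q r n"

definition p_pot :: "(int \<Rightarrow> complex) \<Rightarrow> (int \<Rightarrow> complex) \<Rightarrow> int \<Rightarrow> complex" where
  "p_pot q r n = (q n - q (n + 1) - q n * q (n + 1) * r (n + 1)) * En q r (n - 1) / Dn q r (n + 1)"

definition s_pot :: "(int \<Rightarrow> complex) \<Rightarrow> (int \<Rightarrow> complex) \<Rightarrow> int \<Rightarrow> complex" where
  "s_pot q r n = r (n + 1) * Dn q r n / En q r n"

definition solves_U :: "(int \<Rightarrow> complex) \<Rightarrow> (int \<Rightarrow> complex) \<Rightarrow> complex \<Rightarrow> (int \<Rightarrow> complex \<times> complex) \<Rightarrow> bool" where
  "solves_U a b z \<Psi> \<longleftrightarrow> (\<forall>n.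
      fst (\<Psi> n) = z * fst (\<Psi> (n + 1)) + z * a n * snd (\<Psi> (n + 1)) \<and>
      snd (\<Psi> n) = inverse z * b n * fst (\<Psi> (n + 1)) + inverse z * snd (\<Psi> (n + 1)))"

definition jost_psi :: "(int \<Rightarrow> complex) \<Rightarrow> (int \<Rightarrow> complex) \<Rightarrow> complex \<Rightarrow> (int \<Rightarrow> complex \<times> complex) \<Rightarrow> bool" where
  "jost_psi a b z \<Psi> \<longleftrightarrow> solves_U a b z \<Psi> \<and>
      ((\<lambda>n. fst (\<Psi> n)) \<longlongrightarrow> 0) at_top \<and>
      ((\<lambda>n. snd (\<Psi> n) / z powi n) \<longlongrightarrow> 1) at_top"

definition jost_psibar :: "(int \<Rightarrow> complex) \<Rightarrow> (int \<Rightarrow> complex) \<Rightarrow> complex \<Rightarrow> (int \<Rightarrow> complex \<times> complex) \<Rightarrow> bool" where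
  "jost_psibar a b z \<Psi> \<longleftrightarrow> solves_U a b z \<Psi> \<and>
      ((\<lambda>n. fst (\<Psi> n) * z powi n) \<longlongrightarrow> 1) at_top \<and>
      ((\<lambda>n. snd (\<Psi> n)) \<longlongrightarrow> 0) at_top"

end

theory Submission
  imports Defs "HOL-Analysis.Analysis"
begin


lemma summable_bot:
  fixes x :: "int \<Rightarrow> complex"
  assumes "((\<lambda>n. of_int n ^ 2 * x n) \<longlongrightarrow> 0) at_bot"
  shows "summable (\<lambda>k::nat. norm (x (c - int k)))"
proof -
  have f: "filterlim (\<lambda>k::nat. c - int k) at_bot sequentially"
    unfolding filterlim_at_bot eventually_sequentially
  proof (intro allI)
    fix Z :: int show "\<exists>N. \<forall>k\<ge>N. c - int k \<le> Z" by (rule exI[of _ "nat (c - Z)"]) auto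
  qed
  have "((\<lambda>k. of_int (c - int k) ^ 2 * x (c - int k)) \<longlongrightarrow> 0) sequentially"
    by (rule filterlim_compose[OF assms f])
  from tendstoD[OF this zero_less_one] have ev: "eventually (\<lambda>k. norm (of_int (c - int k) ^ 2 * x (c - int k)) < 1) sequentially"
    by (simp add: dist_norm)
  have "eventually (\<lambda>k. norm (norm (x (c - int k))) \<le> 4 * inverse (real k ^ 2)) sequentially"
    using ev eventually_ge_at_top[of "nat (2*\<bar>c\<bar>+1)"]
  proof eventually_elim
    case (elim k)
    define a where "a = norm (x (c - int k))"
    define d where "d = real_of_int (c - int k)"
    have a0: "a \<ge> 0" unfolding a_def by simp
    have nd: "norm (of_int (c - int k) :: complex) = \<bar>d\<bar>" unfolding d_def by (rule norm_of_int)
    have "norm (of_int (c - int k) ^ 2 :: complex) = d^2" by (simp only: norm_power nd power2_abs)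
    hence h1: "a * d^2 < 1" using elim(1) unfolding a_def by (simp add: norm_mult mult.commute)
    have kk: "real k \<ge> 2*\<bar>real_of_int c\<bar>+1" using elim(2) by linarith
    have "\<bar>d\<bar> \<ge> real k / 2" unfolding d_def using kk by linarith
    hence "(real k/2)^2 \<le> \<bar>d\<bar>^2" by (intro power_mono) auto
    hence "d^2 \<ge> (real k/2)^2" by simp
    hence "a * (real k/2)^2 \<le> a * d^2" using a0 by (simp add: mult_left_mono)
    hence "a * (real k)^2 < 4" using h1 by (simp add: power_divide)
    moreover have "real k > 0" using kk by linarith
    ultimately have "a \<le> 4 / (real k)^2" by (simp add: field_simps)
    thus ?case unfolding a_def by (simp add: field_simps)
  qed
  moreover have "summable (\<lambda>k::nat. 4 * inverse (real k ^ 2))"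
    by (intro summable_mult inverse_power_summable) simp
  ultimately show ?thesis by (rule summable_comparison_test_ev)
qed

lemma summable_top:
  fixes x :: "int \<Rightarrow> complex"
  assumes "((\<lambda>n. of_int n ^ 2 * x n) \<longlongrightarrow> 0) at_top"
  shows "summable (\<lambda>k::nat. norm (x (c + int k)))"
proof -
  have f: "filterlim (\<lambda>k::nat. c + int k) at_top sequentially"
    unfolding filterlim_at_top eventually_sequentially
  proof (intro allI)
    fix Z :: int show "\<exists>N. \<forall>k\<ge>N. c + int k \<ge> Z" by (rule exI[of _ "nat (Z - c)"]) auto
  qed
  have "((\<lambda>k. of_int (c + int k) ^ 2 * x (c + int k)) \<longlongrightarrow> 0) sequentially"
    by (rule filterlim_compose[OF assms f])
  from tendstoD[OF this zero_less_one] have ev: "eventually (\<lambda>k. norm (of_int (c + int k) ^ 2 * x (c + int k)) < 1) sequentially"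
    by (simp add: dist_norm)
  have "eventually (\<lambda>k. norm (norm (x (c + int k))) \<le> 4 * inverse (real k ^ 2)) sequentially"
    using ev eventually_ge_at_top[of "nat (2*\<bar>c\<bar>+1)"]
  proof eventually_elim
    case (elim k)
    define a where "a = norm (x (c + int k))"
    define d where "d = real_of_int (c + int k)"
    have a0: "a \<ge> 0" unfolding a_def by simp
    have nd: "norm (of_int (c + int k) :: complex) = \<bar>d\<bar>" unfolding d_def by (rule norm_of_int)
    have "norm (of_int (c + int k) ^ 2 :: complex) = d^2" by (simp only: norm_power nd power2_abs)
    hence h1: "a * d^2 < 1" using elim(1) unfolding a_def by (simp add: norm_mult mult.commute)
    have kk: "real k \<ge> 2*\<bar>real_of_int c\<bar>+1" using elim(2) by linarith
    have "\<bar>d\<bar> \<ge> real k / 2" unfolding d_def using kk by linarith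
    hence "(real k/2)^2 \<le> \<bar>d\<bar>^2" by (intro power_mono) auto
    hence "d^2 \<ge> (real k/2)^2" by simp
    hence "a * (real k/2)^2 \<le> a * d^2" using a0 by (simp add: mult_left_mono)
    hence "a * (real k)^2 < 4" using h1 by (simp add: power_divide)
    moreover have "real k > 0" using kk by linarith
    ultimately have "a \<le> 4 / (real k)^2" by (simp add: field_simps)
    thus ?case unfolding a_def by (simp add: field_simps)
  qed
  moreover have "summable (\<lambda>k::nat. 4 * inverse (real k ^ 2))"
    by (intro summable_mult inverse_power_summable) simp
  ultimately show ?thesis by (rule summable_comparison_test_ev)
qed

lemma seq_to_int_top:
  fixes f :: "int \<Rightarrow> 'a::topological_space"
  assumes "(\<lambda>N::nat. f (int N)) \<longlonglongrightarrow> L"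
  shows "(f \<longlongrightarrow> L) at_top"
proof (rule topological_tendstoI)
  fix S assume "open S" "L \<in> S"
  then obtain N0 where N0: "\<And>N. N \<ge> N0 \<Longrightarrow> f (int N) \<in> S"
  proof -
    have "eventually (\<lambda>N. f (int N) \<in> S) sequentially"
      using assms \<open>open S\<close> \<open>L \<in> S\<close> by (rule topological_tendstoD)
    then show ?thesis using that unfolding eventually_sequentially by blast
  qed
  show "eventually (\<lambda>n. f n \<in> S) at_top"
    unfolding eventually_at_top_linorder
  proof (intro exI allI impI)
    fix n assume "n \<ge> int N0"
    then have "nat n \<ge> N0" "int (nat n) = n" by auto
    then show "f n \<in> S" using N0 by metis
  qed
qed

lemma const_seq:
  fixes y :: "int \<Rightarrow> complex"
  assumes "\<And>n. y n = y (n+1)" "(y \<longlongrightarrow> c) at_top"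
  shows "y n = c"
proof -
  have e: "y n = y (n + int k)" for k
  proof (induction k)
    case 0 show ?case by simp
  next
    case (Suc k)
    have "y (n + int (Suc k)) = y ((n + int k) + 1)" by (simp add: algebra_simps)
    also have "\<dots> = y (n + int k)" by (rule assms(1)[symmetric])
    finally show ?case using Suc by simp
  qed
  have f: "filterlim (\<lambda>k::nat. n + int k) at_top sequentially"
    unfolding filterlim_at_top eventually_sequentially
  proof (intro allI)
    fix Z :: int show "\<exists>N. \<forall>k\<ge>N. n + int k \<ge> Z" by (rule exI[of _ "nat (Z - n)"]) auto
  qed
  have "(\<lambda>k::nat. y (n + int k)) \<longlonglongrightarrow> c" by (rule filterlim_compose[OF assms(2) f])
  then have "(\<lambda>k::nat. y n) \<longlonglongrightarrow> c" using e by simp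
  then show ?thesis using LIMSEQ_const_iff by blast
qed



lemma prod_lim:
  fixes g :: "int \<Rightarrow> complex"
  assumes nz: "\<And>j. g j \<noteq> 0"
    and bot: "((\<lambda>n. of_int n ^ 2 * (g n - 1)) \<longlongrightarrow> 0) at_bot"
    and top: "((\<lambda>n. of_int n ^ 2 * (g n - 1)) \<longlongrightarrow> 0) at_top"
  shows "\<And>n. lim (\<lambda>m::nat. \<Prod>j\<in>{n - int m..n}. g j) \<noteq> 0"
    and "\<And>n. lim (\<lambda>m::nat. \<Prod>j\<in>{n - int m..n}. g j) = lim (\<lambda>m::nat. \<Prod>j\<in>{(n-1) - int m..n-1}. g j) * g n"
    and "((\<lambda>n. lim (\<lambda>m::nat. \<Prod>j\<in>{n - int m..n}. g j)) \<longlongrightarrow> lim (\<lambda>m::nat. \<Prod>j\<in>{- int m..int m}. g j)) at_top"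
    and "lim (\<lambda>m::nat. \<Prod>j\<in>{- int m..int m}. g j) \<noteq> 0"
proof -
  define A where "A n = lim (\<lambda>m::nat. \<Prod>j\<in>{n - int m..n}. g j)" for n
  have reidx: "(\<Prod>j\<in>{c - int m..c}. g j) = (\<Prod>i\<le>m. g (c - int i))" for c m
    by (rule prod.reindex_bij_witness[of _ "\<lambda>i. c - int i" "\<lambda>j. nat (c - j)"]) auto
  have conv: "(\<lambda>m. \<Prod>j\<in>{c - int m..c}. g j) \<longlonglongrightarrow> A c \<and> A c \<noteq> 0" for c
  proof -
    have "summable (\<lambda>k. norm (g (c - int k) - 1))" by (rule summable_bot[OF bot])
    hence cp: "convergent_prod (\<lambda>k. g (c - int k))"
      by (intro abs_convergent_prod_imp_convergent_prod summable_imp_abs_convergent_prod)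
    hence L: "(\<lambda>m. \<Prod>i\<le>m. g (c - int i)) \<longlonglongrightarrow> prodinf (\<lambda>k. g (c - int k))"
      by (rule convergent_prod_LIMSEQ)
    have nz': "prodinf (\<lambda>k. g (c - int k)) \<noteq> 0" using prodinf_nonzero[OF cp] nz by auto
    from L have L': "(\<lambda>m. \<Prod>j\<in>{c - int m..c}. g j) \<longlonglongrightarrow> prodinf (\<lambda>k. g (c - int k))"
      by (simp add: reidx)
    hence "A c = prodinf (\<lambda>k. g (c - int k))" unfolding A_def by (rule limI)
    with L' nz' show ?thesis by simp
  qed
  show "\<And>n. lim (\<lambda>m::nat. \<Prod>j\<in>{n - int m..n}. g j) \<noteq> 0" using conv unfolding A_def by blast
  have rec: "A n = A (n-1) * g n" for n
  proof -
    have "(\<lambda>m. \<Prod>j\<in>{n - int (Suc m)..n}. g j) \<longlonglongrightarrow> A n"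
      using conv[of n] LIMSEQ_Suc by blast
    moreover have eq: "(\<Prod>j\<in>{n - int (Suc m)..n}. g j) = g n * (\<Prod>j\<in>{(n-1) - int m..n-1}. g j)" for m
      unfolding reidx prod.atMost_Suc_shift by (simp add: algebra_simps)
    ultimately have "(\<lambda>m. g n * (\<Prod>j\<in>{(n-1) - int m..n-1}. g j)) \<longlonglongrightarrow> A n" by simp
    moreover have "(\<lambda>m. g n * (\<Prod>j\<in>{(n-1) - int m..n-1}. g j)) \<longlonglongrightarrow> g n * A (n-1)"
      using conv[of "n-1"] by (intro tendsto_mult tendsto_const) auto
    ultimately show ?thesis using LIMSEQ_unique by (metis mult.commute)
  qed
  show "\<And>n. lim (\<lambda>m::nat. \<Prod>j\<in>{n - int m..n}. g j) = lim (\<lambda>m::nat. \<Prod>j\<in>{(n-1) - int m..n-1}. g j) * g n"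
    using rec unfolding A_def by blast
  define R where "R = prodinf (\<lambda>k. g (1 + int k))"
  have "summable (\<lambda>k. norm (g (1 + int k) - 1))" by (rule summable_top[OF top])
  hence cpR: "convergent_prod (\<lambda>k. g (1 + int k))"
    by (intro abs_convergent_prod_imp_convergent_prod summable_imp_abs_convergent_prod)
  hence LR: "(\<lambda>m. \<Prod>i\<le>m. g (1 + int i)) \<longlonglongrightarrow> R"
    unfolding R_def by (rule convergent_prod_LIMSEQ)
  have Rnz: "R \<noteq> 0" unfolding R_def using prodinf_nonzero[OF cpR] nz by auto
  have "(\<lambda>m. \<Prod>i<Suc m. g (1 + int i)) \<longlonglongrightarrow> R" using LR by (simp add: lessThan_Suc_atMost)
  hence LR': "(\<lambda>m. \<Prod>i<m. g (1 + int i)) \<longlonglongrightarrow> R" by (rule LIMSEQ_imp_Suc)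
  have split: "(\<Prod>j\<in>{- int m..int m}. g j) = (\<Prod>j\<in>{0 - int m..0}. g j) * (\<Prod>i<m. g (1 + int i))" for m
  proof -
    have "{- int m..int m} = {0 - int m..0} \<union> {1..int m}" by auto
    hence "(\<Prod>j\<in>{- int m..int m}. g j) = (\<Prod>j\<in>{0 - int m..0}. g j) * (\<Prod>j\<in>{1..int m}. g j)"
      by (simp add: prod.union_disjoint)
    moreover have "(\<Prod>j\<in>{1..int m}. g j) = (\<Prod>i<m. g (1 + int i))"
      by (rule prod.reindex_bij_witness[of _ "\<lambda>i. 1 + int i" "\<lambda>j. nat (j - 1)"]) auto
    ultimately show ?thesis by simp
  qed
  have Lsym: "(\<lambda>m. \<Prod>j\<in>{- int m..int m}. g j) \<longlonglongrightarrow> A 0 * R"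
    unfolding split using conv[of 0] LR' by (intro tendsto_mult) auto
  hence Ainf: "lim (\<lambda>m::nat. \<Prod>j\<in>{- int m..int m}. g j) = A 0 * R" by (rule limI)
  show "lim (\<lambda>m::nat. \<Prod>j\<in>{- int m..int m}. g j) \<noteq> 0" using Ainf conv[of 0] Rnz by simp
  have AN: "A (int N) = A 0 * (\<Prod>i<N. g (1 + int i))" for N
  proof (induction N)
    case 0 show ?case by simp
  next
    case (Suc N)
    have "A (int (Suc N)) = A (int N) * g (1 + int N)" using rec[of "int (Suc N)"] by simp
    with Suc show ?case by simp
  qed
  have "(\<lambda>N. A (int N)) \<longlonglongrightarrow> A 0 * R" unfolding AN using LR' by (intro tendsto_mult tendsto_const)
  hence "(A \<longlongrightarrow> A 0 * R) at_top" by (rule seq_to_int_top)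
  thus "((\<lambda>n. lim (\<lambda>m::nat. \<Prod>j\<in>{n - int m..n}. g j)) \<longlongrightarrow> lim (\<lambda>m::nat. \<Prod>j\<in>{- int m..int m}. g j)) at_top"
    unfolding Ainf A_def[symmetric] by (simp add: A_def[abs_def])
qed



lemma consG:
  fixes qm rm rp Dq Dm Eq Em u vm xa xb ya yb a b :: complex
  assumes "a = 1 - qm*rm" "b = 1+qm*rp" "Dq\<noteq>0" "Eq\<noteq>0" "a\<noteq>0" "b\<noteq>0"
   "Dm = Dq*a" "Em = Eq*b" "u = qm*Eq/Dm" "vm = (-rm + rp - qm*rm*rp)*Dq/Em"
   "xa = ya + u*yb" "xb = vm*ya + yb"
  shows "rm*xa/Eq + xb/Dq = rp*ya/Em + yb/Dm"
  unfolding assms(7-12) using assms(3-6)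
  apply (simp add: field_simps)
  apply (simp add: assms(1,2) algebra_simps)
  done

lemma hGb:
  fixes qm rp Dm Eq Em u xa ya yb b :: complex
  assumes "b = 1+qm*rp" "Dm\<noteq>0" "Eq\<noteq>0" "b\<noteq>0"
   "Em = Eq*b" "u = qm*Eq/Dm" "rp*ya/Em + yb/Dm = 0" "xa = ya + u*yb"
  shows "xa/Eq = ya/Em"
proof -
  have yb: "yb = - rp*ya*Dm/Em" using assms(7) assms(2-5) by (simp add: field_simps) (metis add.commute eq_neg_iff_add_eq_0)
  show ?thesis unfolding assms(8) yb assms(6) assms(5) using assms(2-4)
  apply (simp add: field_simps)
  apply (simp add: assms(1) algebra_simps)
  done
qed

lemma F1:
  fixes qz ro Eq Ez Dz Di Ei aa ab bb b u :: complex
  assumes "b = 1+qz*ro" "b\<noteq>0" "Eq\<noteq>0" "Dz\<noteq>0" "Di\<noteq>0" "Ei\<noteq>0"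
    "Ez = Eq*b" "u = qz*Eq/Dz" "aa = ab + u*bb" "ro*ab/Ez + bb/Dz = 1/Di"
  shows "qz = Di/Ei*(aa/(Eq/Ei) - ab/(Ez/Ei))"
proof -
  have bb: "bb = Dz/Di - ro*ab*Dz/Ez" using assms(10) assms(2-7) by (simp add: field_simps)
  show ?thesis unfolding assms(9) bb assms(8) assms(7) using assms(2-6)
  apply (simp add: field_simps)
  apply (simp add: assms(1) algebra_simps)
  done
qed

lemma F2:
  fixes rz Dq Eq Di Ei ca cb aa ab :: complex
  assumes "Dq\<noteq>0" "Eq\<noteq>0" "Di\<noteq>0" "Ei\<noteq>0"
    "ca = Eq/Ei" "rz*ca/Eq + cb/Dq = 0" "rz*aa/Eq + ab/Dq = 1/Di"
  shows "rz = - (Ei/Di) * (ca*cb/(ca*ab - cb*aa))"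
proof -
  have cb: "cb = - rz*Dq/Ei" using assms(6) assms(1-5) by (simp add: field_simps) (metis add.commute eq_neg_iff_add_eq_0)
  have ab: "ab = Dq/Di - rz*aa*Dq/Eq" using assms(7) assms(1-4) by (simp add: field_simps)
  have W: "ca*ab - cb*aa = Eq*Dq/(Ei*Di)" unfolding cb ab assms(5) using assms(1-4)
    by (simp add: field_simps)
  show ?thesis unfolding W unfolding cb assms(5) using assms(1-4) by (simp add: field_simps)
qed

lemma consF:
  fixes qm qp rp Dm Dp Eq Em p s xa xb ya yb a b :: complex
  assumes "a = 1 - qp*rp" "b = 1+qm*rp" "Dm\<noteq>0" "Eq\<noteq>0" "a\<noteq>0" "b\<noteq>0"
   "Dp = Dm*a" "Em = Eq*b" "p = (qm - qp - qm*qp*rp)*Eq/Dp" "s = rp*Dm/Em"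
   "xa = ya + p*yb" "xb = s*ya + yb"
  shows "xa/Eq - qm*xb/Dm = ya/Em - qp*yb/Dp"
  unfolding assms(7-12) using assms(3-6)
  apply (simp add: field_simps)
  apply (simp add: assms(1,2) algebra_simps)
  done

lemma hKs:
  fixes qp rp Dm Dp Em s xb ya yb a :: complex
  assumes "a = 1 - qp*rp" "Dm\<noteq>0" "Em\<noteq>0" "a\<noteq>0"
   "Dp = Dm*a" "s = rp*Dm/Em" "ya/Em - qp*yb/Dp = 0" "xb = s*ya + yb"
  shows "xb/Dm = yb/Dp"
proof -
  have ya: "ya = qp*yb*Em/Dp" using assms(7) assms(2-5) by (simp add: field_simps)
  show ?thesis unfolding assms(8) ya assms(6) assms(5) using assms(2-4)
  apply (simp add: field_simps)
  apply (simp add: assms(1) algebra_simps)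
  done
qed

lemma F3:
  fixes qz Eq Dz Di Ei aa ab ca cb :: complex
  assumes "Eq\<noteq>0" "Dz\<noteq>0" "Di\<noteq>0" "Ei\<noteq>0"
    "ab = Dz/Di" "aa/Eq - qz*ab/Dz = 0" "ca/Eq - qz*cb/Dz = 1/Ei"
  shows "qz = Di/Ei*(aa*ab/(ca*ab - cb*aa))"
proof -
  have aa: "aa = qz*Eq/Di" using assms(6) assms(1-5) by (simp add: field_simps)
  have ca: "ca = Eq/Ei + qz*cb*Eq/Dz" using assms(7) assms(1-4) by (simp add: field_simps)
  have W: "ca*ab - cb*aa = Eq*Dz/(Ei*Di)" unfolding ca aa assms(5) using assms(1-4)
    by (simp add: field_simps)
  show ?thesis unfolding W unfolding aa assms(5) using assms(1-4) by (simp add: field_simps)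
qed

lemma F4:
  fixes rz qz Dq Dz Eq Di Ei s ca cb cm a :: complex
  assumes "a = 1 - qz*rz" "a\<noteq>0" "Dq\<noteq>0" "Eq\<noteq>0" "Di\<noteq>0" "Ei\<noteq>0"
    "Dz = Dq*a" "s = rz*Dq/Eq" "cm = s*ca + cb" "ca/Eq - qz*cb/Dz = 1/Ei"
  shows "rz = Ei/Di*(cm/(Dq/Di) - cb/(Dz/Di))"
proof -
  have ca: "ca = Eq/Ei + qz*cb*Eq/Dz" using assms(10) assms(2-7) by (simp add: field_simps)
  show ?thesis unfolding assms(9) ca assms(8) assms(7) using assms(2-6)
  apply (simp add: field_simps)
  apply (simp add: assms(1) algebra_simps)
  done
qed



lemma thm_main:
  fixes q r :: "int \<Rightarrow> complex"
    and \<psi>uv \<psi>buv \<psi>ps \<psi>bps :: "int \<Rightarrow> complex \<times> complex"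
  assumes "rapid_decay q" and "rapid_decay r"
    and "\<And>n. 1 - q n * r n \<noteq> 0"
    and "\<And>n. 1 + q n * r (n + 1) \<noteq> 0"
    and "jost_psi (u_pot q r) (v_pot q r) 1 \<psi>uv"
    and "jost_psibar (u_pot q r) (v_pot q r) 1 \<psi>buv"
    and "jost_psi (p_pot q r) (s_pot q r) 1 \<psi>ps"
    and "jost_psibar (p_pot q r) (s_pot q r) 1 \<psi>bps"
  shows "\<forall>n.
     q n = Dinf q r / Einf q r *
        (fst (\<psi>uv n) / fst (\<psi>buv n) - fst (\<psi>uv (n + 1)) / fst (\<psi>buv (n + 1))) \<and>
     r n = - (Einf q r / Dinf q r) *
        (fst (\<psi>buv n) * snd (\<psi>buv n) /
         (fst (\<psi>buv n) * snd (\<psi>uv n) - snd (\<psi>buv n) * fst (\<psi>uv n))) \<and>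
     q n = Dinf q r / Einf q r *
        (fst (\<psi>ps n) * snd (\<psi>ps n) /
         (fst (\<psi>bps n) * snd (\<psi>ps n) - snd (\<psi>bps n) * fst (\<psi>ps n))) \<and>
     r n = Einf q r / Dinf q r *
        (snd (\<psi>bps (n - 1)) / snd (\<psi>ps (n - 1)) - snd (\<psi>bps n) / snd (\<psi>ps n))"
proof -
  have rdq: "\<And>k. ((\<lambda>n. (of_int n) ^ k * q n) \<longlongrightarrow> 0) at_top \<and> ((\<lambda>n. (of_int n) ^ k * q n) \<longlongrightarrow> 0) at_bot"
    using assms(1) unfolding rapid_decay_def by blast
  have rdr: "\<And>k. ((\<lambda>n. (of_int n) ^ k * r n) \<longlongrightarrow> 0) at_top \<and> ((\<lambda>n. (of_int n) ^ k * r n) \<longlongrightarrow> 0) at_bot"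
    using assms(2) unfolding rapid_decay_def by blast
  have qt: "(q \<longlongrightarrow> 0) at_top" "(q \<longlongrightarrow> 0) at_bot" using rdq[of 0] by auto
  have rt: "(r \<longlongrightarrow> 0) at_top" "(r \<longlongrightarrow> 0) at_bot" using rdr[of 0] by auto
  have fp1t: "filterlim (\<lambda>n::int. n + 1) at_top at_top"
    unfolding filterlim_at_top eventually_at_top_linorder
  proof (intro allI)
    fix Z :: int show "\<exists>N. \<forall>n\<ge>N. Z \<le> n + 1" by (rule exI[of _ "Z - 1"]) auto
  qed
  have fm1t: "filterlim (\<lambda>n::int. n - 1) at_top at_top"
    unfolding filterlim_at_top eventually_at_top_linorder
  proof (intro allI)
    fix Z :: int show "\<exists>N. \<forall>n\<ge>N. Z \<le> n - 1" by (rule exI[of _ "Z + 1"]) auto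
  qed
  have fp1b: "filterlim (\<lambda>n::int. n + 1) at_bot at_bot"
    unfolding filterlim_at_bot eventually_at_bot_linorder
  proof (intro allI)
    fix Z :: int show "\<exists>N. \<forall>n\<le>N. n + 1 \<le> Z" by (rule exI[of _ "Z - 1"]) auto
  qed
  have r1t: "((\<lambda>n. r (n+1)) \<longlongrightarrow> 0) at_top" by (rule filterlim_compose[OF rt(1) fp1t])
  have r1b: "((\<lambda>n. r (n+1)) \<longlongrightarrow> 0) at_bot" by (rule filterlim_compose[OF rt(2) fp1b])
  have gD: "((\<lambda>n. of_int n ^ 2 * ((1 - q n * r n) - 1)) \<longlongrightarrow> 0) F" if "F = at_top \<or> F = at_bot" for F
  proof -
    have "((\<lambda>n. - ((of_int n ^ 2 * q n) * r n)) \<longlongrightarrow> - (0 * 0)) F"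
      using that rdq[of 2] qt rt by (intro tendsto_minus tendsto_mult) auto
    hence "((\<lambda>n. - ((of_int n ^ 2 * q n) * r n)) \<longlongrightarrow> 0) F" by (simp only: mult_zero_left minus_zero)
    moreover have "(\<lambda>n. of_int n ^ 2 * ((1 - q n * r n) - 1)) = (\<lambda>n. - ((of_int n ^ 2 * q n) * r n))"
      by (rule ext) (simp add: mult.assoc)
    ultimately show ?thesis by (simp only:)
  qed
  have gE: "((\<lambda>n. of_int n ^ 2 * ((1 + q n * r (n+1)) - 1)) \<longlongrightarrow> 0) F" if "F = at_top \<or> F = at_bot" for F
  proof -
    have "(((\<lambda>n. (of_int n ^ 2 * q n) * r (n+1))) \<longlongrightarrow> (0 * 0)) F"
      using that rdq[of 2] r1t r1b by (intro tendsto_mult) auto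
    hence "((\<lambda>n. (of_int n ^ 2 * q n) * r (n+1)) \<longlongrightarrow> 0) F" by (simp only: mult_zero_left)
    moreover have "(\<lambda>n. of_int n ^ 2 * ((1 + q n * r (n+1)) - 1)) = (\<lambda>n. (of_int n ^ 2 * q n) * r (n+1))"
      by (rule ext) (simp add: mult.assoc)
    ultimately show ?thesis by (simp only:)
  qed
  note PD = prod_lim[of "\<lambda>j. 1 - q j * r j", OF assms(3) gD[OF disjI2[OF refl]] gD[OF disjI1[OF refl]]]
  note PE = prod_lim[of "\<lambda>j. 1 + q j * r (j+1)", OF assms(4) gE[OF disjI2[OF refl]] gE[OF disjI1[OF refl]]]
  have Dnz: "\<And>n. Dn q r n \<noteq> 0" using PD(1) unfolding Dn_def by assumption
  have Enz: "\<And>n. En q r n \<noteq> 0" using PE(1) unfolding En_def by assumption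
  have Drec: "\<And>n. Dn q r n = Dn q r (n-1) * (1 - q n * r n)" using PD(2) unfolding Dn_def by assumption
  have Erec: "\<And>n. En q r n = En q r (n-1) * (1 + q n * r (n+1))" using PE(2) unfolding En_def by assumption
  have Dlim: "(Dn q r \<longlongrightarrow> Dinf q r) at_top" using PD(3) unfolding Dn_def[abs_def] Dinf_def by assumption
  have Elim: "(En q r \<longlongrightarrow> Einf q r) at_top" using PE(3) unfolding En_def[abs_def] Einf_def by assumption
  have Dinz: "Dinf q r \<noteq> 0" using PD(4) unfolding Dinf_def by assumption
  have Einz: "Einf q r \<noteq> 0" using PE(4) unfolding Einf_def by assumption
  have Dlim1: "((\<lambda>n. Dn q r (n-1)) \<longlongrightarrow> Dinf q r) at_top" by (rule filterlim_compose[OF Dlim fm1t])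
  have Elim1: "((\<lambda>n. En q r (n-1)) \<longlongrightarrow> Einf q r) at_top" by (rule filterlim_compose[OF Elim fm1t])
  have anz: "\<And>n. 1 - q n * r n \<noteq> 0" by (rule assms(3))
  have bnz: "\<And>n. 1 + q n * r (n+1) \<noteq> 0" by (rule assms(4))
  have Drec1: "Dn q r (n+1) = Dn q r n * (1 - q (n+1) * r (n+1))" for n using Drec[of "n + 1"] by simp
  have sol: "fst (\<Psi> n) = fst (\<Psi> (n+1)) + a n * snd (\<Psi> (n+1)) \<and> snd (\<Psi> n) = b n * fst (\<Psi> (n+1)) + snd (\<Psi> (n+1))"
    if "solves_U a b 1 \<Psi>" for a b \<Psi> n
  proof -
    have "fst (\<Psi> n) = 1 * fst (\<Psi> (n+1)) + 1 * a n * snd (\<Psi> (n+1)) \<and> snd (\<Psi> n) = inverse 1 * b n * fst (\<Psi> (n+1)) + inverse 1 * snd (\<Psi> (n+1))"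
      using that unfolding solves_U_def by blast
    then show ?thesis by (simp only: mult_1 inverse_1)
  qed
  have jp: "solves_U a b 1 \<Psi> \<and> ((\<lambda>n. fst (\<Psi> n)) \<longlongrightarrow> 0) at_top \<and> ((\<lambda>n. snd (\<Psi> n)) \<longlongrightarrow> 1) at_top"
    if "jost_psi a b 1 \<Psi>" for a b \<Psi> using that unfolding jost_psi_def by (simp only: power_int_1_left div_by_1)
  have jb: "solves_U a b 1 \<Psi> \<and> ((\<lambda>n. fst (\<Psi> n)) \<longlongrightarrow> 1) at_top \<and> ((\<lambda>n. snd (\<Psi> n)) \<longlongrightarrow> 0) at_top"
    if "jost_psibar a b 1 \<Psi>" for a b \<Psi> using that unfolding jost_psibar_def by (simp only: power_int_1_left mult_1_right)
  note J1 = jp[OF assms(5)] and J2 = jb[OF assms(6)] and J3 = jp[OF assms(7)] and J4 = jb[OF assms(8)]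
  define Di where "Di = Dinf q r"
  define Ei where "Ei = Einf q r"
  define D where "D = Dn q r"
  define E where "E = En q r"
  note defs = Di_def[symmetric] Ei_def[symmetric] D_def[symmetric] E_def[symmetric]
  note Dnz = Dnz[unfolded defs] and Enz = Enz[unfolded defs] and Drec = Drec[unfolded defs]
   and Erec = Erec[unfolded defs] and Drec1 = Drec1[unfolded defs] and Dinz = Dinz[unfolded defs]
   and Einz = Einz[unfolded defs] and Dlim = Dlim[unfolded defs] and Elim = Elim[unfolded defs]
   and Dlim1 = Dlim1[unfolded defs] and Elim1 = Elim1[unfolded defs]
  have u_eq: "u_pot q r m = q m * E (m-1) / D m" for m unfolding u_pot_def D_def E_def ..
  have v_eq: "v_pot q r m = (- r m + r (m + 1) - q m * r m * r (m + 1)) * D (m - 1) / E m" for m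
    unfolding v_pot_def D_def E_def ..
  have p_eq: "p_pot q r m = (q m - q (m + 1) - q m * q (m + 1) * r (m + 1)) * E (m - 1) / D (m + 1)" for m
    unfolding p_pot_def D_def E_def ..
  have s_eq: "s_pot q r m = r (m + 1) * D m / E m" for m unfolding s_pot_def D_def E_def ..
  define G where "G \<Psi> m = r m * fst (\<Psi> m) / E (m-1) + snd (\<Psi> m) / D (m-1)" for \<Psi> :: "int \<Rightarrow> complex \<times> complex" and m
  have consGu: "G \<Psi> m = G \<Psi> (m+1)" if "solves_U (u_pot q r) (v_pot q r) 1 \<Psi>" for \<Psi> m
  proof -
    note s = sol[OF that, of m]
    have "r m * fst (\<Psi> m) / E (m-1) + snd (\<Psi> m) / D (m-1)
        = r (m+1) * fst (\<Psi> (m+1)) / E m + snd (\<Psi> (m+1)) / D m"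
      by (rule consG[where qm="q m" and rm="r m" and rp="r (m+1)" and Dq="D (m-1)" and Dm="D m"
          and Eq="E (m-1)" and Em="E m" and u="u_pot q r m" and vm="v_pot q r m"
          and a="1 - q m * r m" and b="1 + q m * r (m+1)"])
        (use s Dnz Enz anz bnz Drec[of m] Erec[of m] u_eq v_eq in auto)
    then show ?thesis unfolding G_def by simp
  qed
  have Gu: "G \<psi>uv n = 1 / Di" for n
  proof (rule const_seq[where y="G \<psi>uv"])
    show "G \<psi>uv m = G \<psi>uv (m + 1)" for m using consGu J1 by blast
    have "((\<lambda>m. r m * fst (\<psi>uv m) / E (m-1) + snd (\<psi>uv m) / D (m-1)) \<longlongrightarrow> 0 * 0 / Ei + 1 / Di) at_top"
      using J1 rt(1) Elim1 Dlim1 Einz Dinz by (intro tendsto_intros) auto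
    then show "(G \<psi>uv \<longlongrightarrow> 1 / Di) at_top" unfolding G_def[abs_def] by simp
  qed
  have Gb: "G \<psi>buv n = 0" for n
  proof (rule const_seq[where y="G \<psi>buv"])
    show "G \<psi>buv m = G \<psi>buv (m + 1)" for m using consGu J2 by blast
    have "((\<lambda>m. r m * fst (\<psi>buv m) / E (m-1) + snd (\<psi>buv m) / D (m-1)) \<longlongrightarrow> 0 * 1 / Ei + 0 / Di) at_top"
      using J2 rt(1) Elim1 Dlim1 Einz Dinz by (intro tendsto_intros) auto
    then show "(G \<psi>buv \<longlongrightarrow> 0) at_top" unfolding G_def[abs_def] by simp
  qed
  have Hb: "fst (\<psi>buv n) / E (n-1) = 1 / Ei" for n
  proof (rule const_seq[where y="\<lambda>n. fst (\<psi>buv n) / E (n-1)"])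
    show "fst (\<psi>buv m) / E (m-1) = fst (\<psi>buv (m+1)) / E (m+1-1)" for m
    proof -
      note s = sol[OF conjunct1[OF J2], of m]
      have g: "r (m+1) * fst (\<psi>buv (m+1)) / E m + snd (\<psi>buv (m+1)) / D m = 0"
        using Gb[of "m+1"] unfolding G_def by simp
      have "fst (\<psi>buv m) / E (m-1) = fst (\<psi>buv (m+1)) / E m"
        by (rule hGb[where qm="q m" and rp="r (m+1)" and Dm="D m"
          and Eq="E (m-1)" and Em="E m" and u="u_pot q r m" and b="1 + q m * r (m+1)"
          and yb="snd (\<psi>buv (m+1))"])
          (use s g Dnz Enz bnz Erec[of m] u_eq in auto)
      then show ?thesis by simp
    qed
    show "((\<lambda>n. fst (\<psi>buv n) / E (n-1)) \<longlongrightarrow> 1 / Ei) at_top"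
      using J2 Elim1 Einz by (intro tendsto_intros) auto
  qed
  have fb: "fst (\<psi>buv n) = E (n-1) / Ei" for n using Hb[of n] Enz[of "n-1"] Einz by (simp add: field_simps)
  define FF where "FF \<Psi> m = fst (\<Psi> m) / E (m-1) - q m * snd (\<Psi> m) / D m" for \<Psi> :: "int \<Rightarrow> complex \<times> complex" and m
  have consFp: "FF \<Psi> m = FF \<Psi> (m+1)" if "solves_U (p_pot q r) (s_pot q r) 1 \<Psi>" for \<Psi> m
  proof -
    note s = sol[OF that, of m]
    have "fst (\<Psi> m) / E (m-1) - q m * snd (\<Psi> m) / D m
        = fst (\<Psi> (m+1)) / E m - q (m+1) * snd (\<Psi> (m+1)) / D (m+1)"
      by (rule consF[where qm="q m" and qp="q (m+1)" and rp="r (m+1)" and Dm="D m" and Dp="D (m+1)"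
          and Eq="E (m-1)" and Em="E m" and p="p_pot q r m" and s="s_pot q r m"
          and a="1 - q (m+1) * r (m+1)" and b="1 + q m * r (m+1)"])
        (use s Dnz Enz anz bnz Drec1[of m] Erec[of m] p_eq s_eq in auto)
    then show ?thesis unfolding FF_def by simp
  qed
  have Fp: "FF \<psi>ps n = 0" for n
  proof (rule const_seq[where y="FF \<psi>ps"])
    show "FF \<psi>ps m = FF \<psi>ps (m + 1)" for m using consFp J3 by blast
    have "((\<lambda>m. fst (\<psi>ps m) / E (m-1) - q m * snd (\<psi>ps m) / D m) \<longlongrightarrow> 0 / Ei - 0 * 1 / Di) at_top"
      using J3 qt(1) Elim1 Dlim Einz Dinz by (intro tendsto_intros) auto
    then show "(FF \<psi>ps \<longlongrightarrow> 0) at_top" unfolding FF_def[abs_def] by simp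
  qed
  have Fb: "FF \<psi>bps n = 1 / Ei" for n
  proof (rule const_seq[where y="FF \<psi>bps"])
    show "FF \<psi>bps m = FF \<psi>bps (m + 1)" for m using consFp J4 by blast
    have "((\<lambda>m. fst (\<psi>bps m) / E (m-1) - q m * snd (\<psi>bps m) / D m) \<longlongrightarrow> 1 / Ei - 0 * 0 / Di) at_top"
      using J4 qt(1) Elim1 Dlim Einz Dinz by (intro tendsto_intros) auto
    then show "(FF \<psi>bps \<longlongrightarrow> 1 / Ei) at_top" unfolding FF_def[abs_def] by simp
  qed
  have Kp: "snd (\<psi>ps n) / D n = 1 / Di" for n
  proof (rule const_seq[where y="\<lambda>n. snd (\<psi>ps n) / D n"])
    show "snd (\<psi>ps m) / D m = snd (\<psi>ps (m+1)) / D (m+1)" for m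
    proof -
      note s = sol[OF conjunct1[OF J3], of m]
      have f: "fst (\<psi>ps (m+1)) / E m - q (m+1) * snd (\<psi>ps (m+1)) / D (m+1) = 0"
        using Fp[of "m+1"] unfolding FF_def by simp
      show ?thesis
        by (rule hKs[where qp="q (m+1)" and rp="r (m+1)" and Dm="D m" and Dp="D (m+1)"
          and Em="E m" and s="s_pot q r m" and a="1 - q (m+1) * r (m+1)"
          and ya="fst (\<psi>ps (m+1))"])
          (use s f Dnz Enz anz Drec1[of m] s_eq in auto)
    qed
    show "((\<lambda>n. snd (\<psi>ps n) / D n) \<longlongrightarrow> 1 / Di) at_top"
      using J3 Dlim Dinz by (intro tendsto_intros) auto
  qed
  have sp: "snd (\<psi>ps n) = D n / Di" for n using Kp[of n] Dnz[of n] Dinz by (simp add: field_simps)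
  show ?thesis unfolding defs
  proof (intro allI conjI)
    fix n
    have g1: "r (n+1) * fst (\<psi>uv (n+1)) / E n + snd (\<psi>uv (n+1)) / D n = 1 / Di"
      using Gu[of "n+1"] unfolding G_def by simp
    have "q n = Di/Ei*(fst (\<psi>uv n)/(E (n-1)/Ei) - fst (\<psi>uv (n+1))/(E n/Ei))"
      by (rule F1[where ro="r (n+1)" and Dz="D n" and b="1 + q n * r (n+1)" and u="u_pot q r n"
          and bb="snd (\<psi>uv (n+1))"])
        (use sol[OF conjunct1[OF J1], of n] g1 Dnz Enz Dinz Einz bnz Erec[of n] u_eq in auto)
    then show "q n = Di / Ei * (fst (\<psi>uv n) / fst (\<psi>buv n) - fst (\<psi>uv (n + 1)) / fst (\<psi>buv (n + 1)))"
      using fb[of n] fb[of "n+1"] by simp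
    show "r n = - (Ei / Di) * (fst (\<psi>buv n) * snd (\<psi>buv n) /
         (fst (\<psi>buv n) * snd (\<psi>uv n) - snd (\<psi>buv n) * fst (\<psi>uv n)))"
      by (rule F2[where Dq="D (n-1)" and Eq="E (n-1)"])
        (use fb[of n] Gb[of n] Gu[of n] Dnz Enz Dinz Einz in \<open>auto simp: G_def\<close>)
    show "q n = Di / Ei * (fst (\<psi>ps n) * snd (\<psi>ps n) /
         (fst (\<psi>bps n) * snd (\<psi>ps n) - snd (\<psi>bps n) * fst (\<psi>ps n)))"
      by (rule F3[where Eq="E (n-1)" and Dz="D n"])
        (use sp[of n] Fp[of n] Fb[of n] Dnz Enz Dinz Einz in \<open>auto simp: FF_def\<close>)
    have "r n = Ei/Di*(snd (\<psi>bps (n-1))/(D (n-1)/Di) - snd (\<psi>bps n)/(D n/Di))"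
      by (rule F4[where qz="q n" and Dq="D (n-1)" and Eq="E (n-1)" and s="s_pot q r (n-1)"
          and ca="fst (\<psi>bps n)" and a="1 - q n * r n"])
        (use sol[OF conjunct1[OF J4], of "n-1"] Fb[of n] Dnz Enz Dinz Einz anz Drec[of n] s_eq in \<open>auto simp: FF_def\<close>)
    then show "r n = Ei / Di * (snd (\<psi>bps (n - 1)) / snd (\<psi>ps (n - 1)) - snd (\<psi>bps n) / snd (\<psi>ps n))"
      using sp[of n] sp[of "n-1"] by simp
  qed
qed


theorem theorem3p8:
  fixes q r :: "int \<Rightarrow> complex"
    and \<psi>uv \<psi>buv \<psi>ps \<psi>bps :: "int \<Rightarrow> complex \<times> complex"
  assumes "rapid_decay q" and "rapid_decay r"
    and "\<And>n. 1 - q n * r n \<noteq> 0"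
    and "\<And>n. 1 + q n * r (n + 1) \<noteq> 0"
    and "jost_psi (u_pot q r) (v_pot q r) 1 \<psi>uv"
    and "jost_psibar (u_pot q r) (v_pot q r) 1 \<psi>buv"
    and "jost_psi (p_pot q r) (s_pot q r) 1 \<psi>ps"
    and "jost_psibar (p_pot q r) (s_pot q r) 1 \<psi>bps"
  shows "\<forall>n.
     q n = Dinf q r / Einf q r *
        (fst (\<psi>uv n) / fst (\<psi>buv n) - fst (\<psi>uv (n + 1)) / fst (\<psi>buv (n + 1))) \<and>
     r n = - (Einf q r / Dinf q r) *
        (fst (\<psi>buv n) * snd (\<psi>buv n) /
         (fst (\<psi>buv n) * snd (\<psi>uv n) - snd (\<psi>buv n) * fst (\<psi>uv n))) \<and>
     q n = Dinf q r / Einf q r *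
        (fst (\<psi>ps n) * snd (\<psi>ps n) /
         (fst (\<psi>bps n) * snd (\<psi>ps n) - snd (\<psi>bps n) * fst (\<psi>ps n))) \<and>
     r n = Einf q r / Dinf q r *
        (snd (\<psi>bps (n - 1)) / snd (\<psi>ps (n - 1)) - snd (\<psi>bps n) / snd (\<psi>ps n))"
  using assms by (rule thm_main)

end
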